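(* Let $d\ge1$ and suppose a set of $d$ elements (a gap) is partitioned into $\ell$ nonempty intervals $I_1,\dots,I_\ell$, consecutive by rank, and that for some $0\le p\le \ell$ the intervals $I_1,\dots,I_p$ are designated left-side and $I_{p+1},\dots,I_\ell$ right-side. Suppose the following balance condition holds: for every left-side interval $I_j$ with $j<p$, the number of elements in $I_1\cup\dots\cup I_{j-1}$ is strictly less than $|I_j|+|I_{j+1}|$; and symmetrically, for every right-side interval $I_j$ with $j>p+1$, the number of elements in $I_{j+1}\cup\dots\cup I_\ell$ is strictly less than $|I_j|+|I_{j-1}|$. Then $\ell\le 4\log(d)$.
   Context: $\log(x):=\max(\log_2 x,1)$, with $\log_2$ the binary logarithm. The balance condition is the negation of the merging rule: a left-side interval that is not the rightmost left-side interval is merged into its right neighbour when the number of elements left of it in the gap is at least the sum of its size and its right neighbour's size (and symmetrically on the right side). *)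

theory Defs
  imports Complex_Main
begin

text \<open>The paper's log: log(x) = max(log_2 x, 1).\<close>
definition Log :: "real \<Rightarrow> real" where
  "Log x = max (log 2 x) 1"

text \<open>The gap is modelled as the ranks {0..<d}; a partition into l consecutive
nonempty intervals is given by boundaries b 0 = 0 < b 1 < ... < b l = d,
with interval I_j = {b (j-1) ..< b j} for j = 1..l.\<close>
definition interval :: "(nat \<Rightarrow> nat) \<Rightarrow> nat \<Rightarrow> nat set" where
  "interval b j = {b (j - 1) ..< b j}"

end

theory Submission
  imports Defs
begin

lemma mono_b:
  fixes b :: "nat \<Rightarrow> nat" and l i k :: nat
  assumes "\<And>j. 1 \<le> j \<Longrightarrow> j \<le> l \<Longrightarrow> b (j - 1) < (b j::nat)"
  shows "i \<le> k \<Longrightarrow> k \<le> l \<Longrightarrow> b i \<le> b k"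
proof (induction k)
  case 0 then show ?case by simp
next
  case (Suc k)
  show ?case
  proof (cases "i = Suc k")
    case False
    then have "b i \<le> b k" using Suc by simp
    moreover have "b k < b (Suc k)" using assms[of "Suc k"] Suc by simp
    ultimately show ?thesis by simp
  qed simp
qed

lemma union_int:
  fixes b :: "nat \<Rightarrow> nat" and l m n :: nat
  assumes "\<And>j. 1 \<le> j \<Longrightarrow> j \<le> l \<Longrightarrow> b (j - 1) < (b j::nat)"
  shows "m \<le> n \<Longrightarrow> n \<le> l \<Longrightarrow> (\<Union>i\<in>{m<..n}. interval b i) = {b m..<b n}"
proof (induction n)
  case 0 then show ?case by simp
next
  case (Suc n)
  show ?case
  proof (cases "m = Suc n")
    case False
    then have mn: "m \<le> n" using Suc by simp
    have e: "{m<..Suc n} = insert (Suc n) {m<..n}" using mn by auto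
    have "b m \<le> b n" using mono_b[of l b, OF assms] mn Suc by simp
    moreover have "b n < b (Suc n)" using assms[of "Suc n"] Suc by simp
    ultimately show ?thesis using Suc mn unfolding e by (auto simp: interval_def)
  qed simp
qed

lemma growth:
  fixes f :: "nat \<Rightarrow> nat"
  assumes "f 0 = 0"
    and inc: "\<And>j. 1 \<le> j \<Longrightarrow> j \<le> p \<Longrightarrow> f (j - 1) < f j"
    and dbl: "\<And>j. 1 \<le> j \<Longrightarrow> j < p \<Longrightarrow> 2 * f (j - 1) < f (j + 1)"
  shows "1 \<le> j \<Longrightarrow> j \<le> p \<Longrightarrow> 2 ^ (j - 1) \<le> f j ^ 2"
proof (induction j rule: less_induct)
  case (less j)
  show ?case
  proof (cases "j \<le> 2")
    case True
    have f1: "f 1 \<ge> 1" using inc[of 1] less assms(1) by simp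
    show ?thesis
    proof (cases "j = 1")
      case True then show ?thesis using f1 by simp
    next
      case False
      then have j2: "j = 2" using True less by simp
      have "f 2 > f 1" using inc[of 2] less j2 by simp
      then have "f 2 \<ge> 2" using f1 by simp
      then have "f 2 ^ 2 \<ge> 2 ^ 2" by (rule power_mono) simp
      then show ?thesis using j2 by simp
    qed
  next
    case False
    have ih: "2 ^ (j - 2 - 1) \<le> f (j - 2) ^ 2" using less.IH[of "j - 2"] less False by simp
    have "2 * f (j - 1 - 1) < f (j - 1 + 1)" using dbl[of "j - 1"] less False by simp
    then have h: "2 * f (j - 2) \<le> f j" using False by (simp add: numeral_2_eq_2)
    have "(2 * f (j - 2)) ^ 2 \<le> f j ^ 2" using h by (rule power_mono) simp
    moreover have "(2::nat) ^ (j - 1) = 4 * 2 ^ (j - 2 - 1)"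
    proof -
      have "j - 1 = Suc (Suc (j - 2 - 1))" using False by simp
      then show ?thesis by simp
    qed
    ultimately show ?thesis using ih by (simp add: power_mult_distrib)
  qed
qed


lemma final_real:
  fixes l d :: nat
  assumes "5 \<le> l" "2 ^ l \<le> d ^ 4"
  shows "real l \<le> 4 * Log (real d)"
proof -
  have dpos: "d > 0" using assms(2) by (cases d) auto
  have "(2::real) ^ l \<le> real d ^ 4" using assms(2) by (metis of_nat_le_iff of_nat_numeral of_nat_power)
  then have "log 2 ((2::real) ^ l) \<le> log 2 (real d ^ 4)"
    using dpos by (subst log_le_cancel_iff) auto
  then have "real l \<le> 4 * log 2 (real d)" using dpos by (simp add: log_nat_power)
  then show ?thesis unfolding Log_def by linarith
qed

theorem lemma6p2:
  fixes d l p :: nat and b :: "nat \<Rightarrow> nat"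
  assumes "d \<ge> 1"
    and "b 0 = 0" and "b l = d"
    and "\<And>j. 1 \<le> j \<Longrightarrow> j \<le> l \<Longrightarrow> b (j - 1) < b j"
    and "p \<le> l"
    and left: "\<And>j. 1 \<le> j \<Longrightarrow> j < p \<Longrightarrow>
        card (\<Union>i\<in>{1..<j}. interval b i) < card (interval b j) + card (interval b (j + 1))"
    and right: "\<And>j. p + 1 < j \<Longrightarrow> j \<le> l \<Longrightarrow>
        card (\<Union>i\<in>{j<..l}. interval b i) < card (interval b j) + card (interval b (j - 1))"
  shows "real l \<le> 4 * Log (real d)"
proof (cases "l \<le> 4")
  case True
  have "Log (real d) \<ge> 1" unfolding Log_def by simp
  then show ?thesis using True by simp
next
  case False
  note inc = assms(4)
  note mono = mono_b[of l b, OF inc]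
  note un = union_int[of l b, OF inc]
  have ci: "card (interval b j) = b j - b (j - 1)" for j by (simp add: interval_def)
  define q where "q = l - p"
  define c where "c k = d - b (l - k)" for k
  have bp: "2 ^ (j - 1) \<le> b j ^ 2" if "1 \<le> j" "j \<le> p" for j
  proof (rule growth[of b p, OF assms(2) _ _ that])
    fix j assume "1 \<le> j" "j \<le> p" then show "b (j - 1) < b j" using inc assms(5) by simp
  next
    fix j assume j: "1 \<le> j" "j < p"
    have "{1..<j} = {0<..j - 1}" using j by auto
    then have "(\<Union>i\<in>{1..<j}. interval b i) = {b 0..<b (j - 1)}" using un[of 0 "j - 1"] j assms(5) by simp
    then have "b (j - 1) < (b j - b (j - 1)) + (b (j + 1) - b j)" using left[OF j] assms(2) ci[of j] ci[of "j+1"] by simp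
    moreover have "b (j - 1) \<le> b j" "b j \<le> b (j + 1)" using mono j assms(5) by auto
    ultimately show "2 * b (j - 1) < b (j + 1)" by linarith
  qed
  have cq: "2 ^ (k - 1) \<le> c k ^ 2" if "1 \<le> k" "k \<le> q" for k
  proof (rule growth[of c q, OF _ _ _ that])
    show "c 0 = 0" using assms(3) by (simp add: c_def)
  next
    fix k assume k: "1 \<le> k" "k \<le> q"
    have "b (l - k) < b (l - k + 1)" using inc[of "l - k + 1"] k q_def by simp
    moreover have "b (l - (k - 1)) = b (l - k + 1)" using k q_def by (simp add: Suc_diff_le)
    moreover have "b (l - k + 1) \<le> d" using mono[of "l - k + 1" l] assms(3) k q_def by simp
    ultimately show "c (k - 1) < c k" unfolding c_def by linarith
  next
    fix k assume k: "1 \<le> k" "k < q"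
    define j where "j = l - k + 1"
    have j: "p + 1 < j" "j \<le> l" using k q_def j_def by auto
    have "(\<Union>i\<in>{j<..l}. interval b i) = {b j..<b l}" using un[of j l] j by simp
    then have h: "d - b j < (b j - b (j - 1)) + (b (j - 1) - b (j - 1 - 1))"
      using right[OF j] assms(3) ci[of j] ci[of "j - 1"] by simp
    have m: "b (j - 1 - 1) \<le> b (j - 1)" "b (j - 1) \<le> b j" "b j \<le> d" using mono j assms(3) by auto
    have e: "l - (k - 1) = j" "l - (k + 1) = j - 1 - 1" using j_def k q_def by auto
    have "c (k - 1) = d - b j" "c (k + 1) = d - b (j - 1 - 1)"
      unfolding c_def using e by simp_all
    moreover have "2 * (d - b j) < d - b (j - 1 - 1)" using h m by linarith
    ultimately show "2 * c (k - 1) < c (k + 1)" by simp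
  qed
  have bpd: "b p \<le> d" using mono[of p l] assms(3,5) by simp
  have dsum: "d = b p + c q" using bpd by (simp add: c_def q_def assms(5) diff_diff_cancel)
  have "2 ^ l \<le> d ^ 4"
  proof (cases "p = 0")
    case True
    then have "d = c q" using dsum assms(2) by simp
    moreover have "2 ^ (l - 1) \<le> c q ^ 2" using cq[of q] True q_def False by simp
    ultimately have X: "2 ^ (l - 1) \<le> d ^ 2" by simp
    have "(2 ^ (l - 1)) ^ 2 \<le> (d ^ 2) ^ 2" using X by (rule power_mono) simp
    moreover have "(d ^ 2) ^ 2 = d ^ 4" by (simp flip: power_mult)
    moreover have "(2::nat) ^ l \<le> 2 ^ ((l - 1) * 2)"
      using False by (intro power_increasing) auto
    moreover have "(2::nat) ^ ((l - 1) * 2) = (2 ^ (l - 1)) ^ 2" by (rule power_mult)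
    ultimately show ?thesis by linarith
  next
    case p0: False
    show ?thesis
    proof (cases "q = 0")
      case True
      then have pl: "p = l" using q_def assms(5) by simp
      then have "d = b p" using assms(3) by simp
      moreover have "2 ^ (l - 1) \<le> b p ^ 2" using bp[of p] pl False by simp
      ultimately have X: "2 ^ (l - 1) \<le> d ^ 2" by simp
      have "(2 ^ (l - 1)) ^ 2 \<le> (d ^ 2) ^ 2" using X by (rule power_mono) simp
      moreover have "(d ^ 2) ^ 2 = d ^ 4" by (simp flip: power_mult)
      moreover have "(2::nat) ^ l \<le> 2 ^ ((l - 1) * 2)"
        using False by (intro power_increasing) auto
      moreover have "(2::nat) ^ ((l - 1) * 2) = (2 ^ (l - 1)) ^ 2" by (rule power_mult)
      ultimately show ?thesis by linarith
    next
      case q0: False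
      have B: "2 ^ (p - 1) \<le> b p ^ 2" using bp[of p] p0 by simp
      have C: "2 ^ (q - 1) \<le> c q ^ 2" using cq[of q] q0 by simp
      have am: "4 * (b p * c q) \<le> d ^ 2" unfolding dsum
      proof -
        have "int (4 * (b p * c q)) \<le> int ((b p + c q) ^ 2)"
          using sum_squares_ge_zero[of "int (b p) - int (c q)" 0] by (simp add: power2_eq_square algebra_simps)
        then show "4 * (b p * c q) \<le> (b p + c q) ^ 2" by linarith
      qed
      have "(2::nat) ^ l \<le> 2 ^ (l + 2)" by (rule power_increasing) auto
      also have "(2::nat) ^ (l + 2) = 16 * (2 ^ (p - 1) * 2 ^ (q - 1))"
      proof -
        have "l + 2 = (p - 1) + (q - 1) + 4" using p0 q0 q_def assms(5) by simp
        then show ?thesis by (simp add: power_add)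
      qed
      also have "\<dots> \<le> 16 * (b p ^ 2 * c q ^ 2)" using B C by (simp add: mult_mono)
      also have "\<dots> = (4 * (b p * c q)) ^ 2" by (simp add: power_mult_distrib)
      also have "\<dots> \<le> (d ^ 2) ^ 2" using am by (rule power_mono) simp
      also have "(d ^ 2) ^ 2 = d ^ 4" by (simp flip: power_mult)
      finally show ?thesis .
    qed
  qed
  then show ?thesis using final_real False by simp
qed

end
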